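(* For fixed positive integers $x$ and $y$, the expected number of edges in the task-dependency graph resulting from the $(x,y)$ edge-addition process on $n$ vertices is $\Theta(n^2)$ as $n\to\infty$, where the constant in the lower bound depends on $(x,y)$.
   Context: A task-dependency graph is a finite directed acyclic graph (no loops, no multiple edges). A vertex is initial if it has in-degree $0$ and terminal if it has out-degree $0$ (an isolated vertex is both). An $(x,y)$ task-dependency graph has exactly $x$ initial and exactly $y$ terminal vertices. The $(x,y)$ edge-addition process on $n$ vertices: start with the empty graph on $\{1,\dots,n\}$ and repeatedly add, uniformly at random, an edge $(a,b)$ with $a<b$ not yet present; if an addition would cause fewer than $x$ initial vertices or fewer than $y$ terminal vertices, it is cancelled. The process halts if the graph after some edge addition is an $(x,y)$ task-dependency graph, or if no more edges can be added; the result is the final graph. *)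

theory Defs
  imports "HOL-Probability.Probability" "HOL-Library.Landau_Symbols"
begin

text \<open>A graph on vertex set {1..n} is a set of directed edges (a,b) with a < b
  (hence acyclic, no loops, no multiple edges).\<close>

definition initial_vertices :: "nat \<Rightarrow> (nat \<times> nat) set \<Rightarrow> nat set" where
  "initial_vertices n G = {v \<in> {1..n}. \<not> (\<exists>a. (a, v) \<in> G)}"

definition terminal_vertices :: "nat \<Rightarrow> (nat \<times> nat) set \<Rightarrow> nat set" where
  "terminal_vertices n G = {v \<in> {1..n}. \<not> (\<exists>b. (v, b) \<in> G)}"

definition is_xy_tdg :: "nat \<Rightarrow> nat \<Rightarrow> nat \<Rightarrow> (nat \<times> nat) set \<Rightarrow> bool" where
  "is_xy_tdg x y n G \<longleftrightarrow>
     card (initial_vertices n G) = x \<and> card (terminal_vertices n G) = y"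

text \<open>Edges whose addition is not cancelled.\<close>
definition addable_edges :: "nat \<Rightarrow> nat \<Rightarrow> nat \<Rightarrow> (nat \<times> nat) set \<Rightarrow> (nat \<times> nat) set" where
  "addable_edges x y n G =
     {(a, b). 1 \<le> a \<and> a < b \<and> b \<le> n \<and> (a, b) \<notin> G \<and>
              card (initial_vertices n (insert (a, b) G)) \<ge> x \<and>
              card (terminal_vertices n (insert (a, b) G)) \<ge> y}"

text \<open>Otherwise a uniformly random non-cancelled edge is added
  (choosing uniformly among all absent edges and discarding cancelled ones gives the
  same distribution of the next actual addition).\<close>
definition process_step :: "nat \<Rightarrow> nat \<Rightarrow> nat \<Rightarrow> (nat \<times> nat) set \<Rightarrow> (nat \<times> nat) set pmf" where
  "process_step x y n G =
     (if (G \<noteq> {} \<and> is_xy_tdg x y n G) \<or> addable_edges x y n G = {} then return_pmf G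
      else map_pmf (\<lambda>e. insert e G) (pmf_of_set (addable_edges x y n G)))"

text \<open>Distribution of the final graph: each non-halted step adds an edge, and there are
  fewer than n*n possible edges, so n*n steps suffice (halted states are fixed).\<close>
definition final_graph :: "nat \<Rightarrow> nat \<Rightarrow> nat \<Rightarrow> (nat \<times> nat) set pmf" where
  "final_graph x y n =
     ((\<lambda>p. bind_pmf p (process_step x y n)) ^^ (n * n)) (return_pmf {})"

definition expected_edges :: "nat \<Rightarrow> nat \<Rightarrow> nat \<Rightarrow> real" where
  "expected_edges x y n = measure_pmf.expectation (final_graph x y n) (\<lambda>G. real (card G))"

end

theory Submission
  imports Defs
begin


definition EE :: "nat \<Rightarrow> (nat \<times> nat) set" where
  "EE n = {(a,b). 1 \<le> a \<and> a < b \<and> b \<le> n}"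

lemma EE_sub: "EE n \<subseteq> {1..n} \<times> {1..n}"
  by (auto simp: EE_def)

lemma finite_EE[simp]: "finite (EE n)"
  by (rule finite_subset[OF EE_sub]) auto

lemma card_EE_le: "card (EE n) \<le> n * n"
  using card_mono[OF _ EE_sub] by (simp add: card_cartesian_product)

definition halted :: "nat \<Rightarrow> nat \<Rightarrow> nat \<Rightarrow> (nat \<times> nat) set \<Rightarrow> bool" where
  "halted x y n G \<longleftrightarrow> (G \<noteq> {} \<and> is_xy_tdg x y n G) \<or> addable_edges x y n G = {}"

lemma addable_sub: "addable_edges x y n G \<subseteq> EE n - G"
  by (auto simp: addable_edges_def EE_def)

lemma finite_addable[simp]: "finite (addable_edges x y n G)"
  by (rule finite_subset[OF addable_sub]) auto

lemma initial_insert: "initial_vertices n (insert (a,b) G) = initial_vertices n G - {b}"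
  by (auto simp: initial_vertices_def)

lemma terminal_insert: "terminal_vertices n (insert (a,b) G) = terminal_vertices n G - {a}"
  by (auto simp: terminal_vertices_def)

lemma step_halted: "halted x y n G \<Longrightarrow> process_step x y n G = return_pmf G"
  by (simp add: process_step_def halted_def)

lemma step_not_halted: "\<not> halted x y n G \<Longrightarrow>
   process_step x y n G = map_pmf (\<lambda>e. insert e G) (pmf_of_set (addable_edges x y n G))"
  by (auto simp: process_step_def halted_def)

lemma set_step:
  assumes "G' \<in> set_pmf (process_step x y n G)"
  shows "(halted x y n G \<and> G' = G) \<or> (\<not> halted x y n G \<and> (\<exists>e \<in> addable_edges x y n G. G' = insert e G))"
proof (cases "halted x y n G")
  case True thus ?thesis using assms by (simp add: step_halted)
next
  case False
  hence "addable_edges x y n G \<noteq> {}" by (simp add: halted_def)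
  thus ?thesis using assms False by (auto simp: step_not_halted)
qed

definition iter :: "nat \<Rightarrow> nat \<Rightarrow> nat \<Rightarrow> nat \<Rightarrow> (nat \<times> nat) set pmf" where
  "iter x y n k = ((\<lambda>p. bind_pmf p (process_step x y n)) ^^ k) (return_pmf {})"

lemma iter_Suc: "iter x y n (Suc k) = bind_pmf (iter x y n k) (process_step x y n)"
  by (simp add: iter_def)

definition Inv :: "nat \<Rightarrow> nat \<Rightarrow> nat \<Rightarrow> nat \<Rightarrow> (nat \<times> nat) set \<Rightarrow> bool" where
  "Inv x y n k G \<longleftrightarrow> G \<subseteq> EE n \<and> x \<le> card (initial_vertices n G) \<and> y \<le> card (terminal_vertices n G)
     \<and> (k \<le> card G \<or> halted x y n G)"

lemma Inv_iter:
  assumes "x \<le> n" "y \<le> n"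
  shows "G \<in> set_pmf (iter x y n k) \<Longrightarrow> Inv x y n k G"
proof (induction k arbitrary: G)
  case 0
  hence G: "G = {}" by (simp add: iter_def)
  have "initial_vertices n {} = {1..n}" "terminal_vertices n {} = {1..n}"
    by (auto simp: initial_vertices_def terminal_vertices_def)
  thus ?case using G assms by (simp add: Inv_def)
next
  case (Suc k)
  then obtain H where H: "H \<in> set_pmf (iter x y n k)" and G: "G \<in> set_pmf (process_step x y n H)"
    by (auto simp: iter_Suc)
  have IH: "Inv x y n k H" using Suc.IH H by blast
  from set_step[OF G] show ?case
  proof
    assume "halted x y n H \<and> G = H"
    thus ?thesis using IH by (auto simp: Inv_def)
  next
    assume "\<not> halted x y n H \<and> (\<exists>e \<in> addable_edges x y n H. G = insert e H)"
    then obtain e where nh: "\<not> halted x y n H" and e: "e \<in> addable_edges x y n H" and G: "G = insert e H"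
      by blast
    have "e \<in> EE n - H" using e addable_sub by blast
    moreover have "finite H" using IH finite_subset[OF _ finite_EE] by (auto simp: Inv_def)
    ultimately have "card G = Suc (card H)" using G by simp
    moreover have "k \<le> card H" using IH nh by (simp add: Inv_def)
    moreover have "G \<subseteq> EE n" using IH \<open>e \<in> EE n - H\<close> G by (auto simp: Inv_def)
    moreover have "x \<le> card (initial_vertices n G)" "y \<le> card (terminal_vertices n G)"
      using e G by (auto simp: addable_edges_def)
    ultimately show ?thesis by (simp add: Inv_def)
  qed
qed

lemma final_iter: "final_graph x y n = iter x y n (n*n)"
  by (simp add: final_graph_def iter_def)


lemma card_EE_less: "card (EE n) < n * n \<or> n = 0"
proof (cases "n = 0")
  case False
  have "(1,1) \<in> {1..n} \<times> {1..n}" "(1,1) \<notin> EE n" using False by (auto simp: EE_def)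
  hence "EE n \<subset> {1..n} \<times> {1..n}" using EE_sub by blast
  hence "card (EE n) < card ({1..n} \<times> {1..n})" by (intro psubset_card_mono) auto
  thus ?thesis by (simp add: card_cartesian_product)
qed simp

lemma EE_zero: "EE 0 = {}" by (auto simp: EE_def)

lemma final_inv:
  assumes "x \<le> n" "y \<le> n" "G \<in> set_pmf (final_graph x y n)"
  shows "halted x y n G" "G \<subseteq> EE n" "x \<le> card (initial_vertices n G)" "y \<le> card (terminal_vertices n G)"
proof -
  have I: "Inv x y n (n*n) G" using Inv_iter[OF assms(1,2)] assms(3) by (simp add: final_iter)
  thus "G \<subseteq> EE n" "x \<le> card (initial_vertices n G)" "y \<le> card (terminal_vertices n G)"
    by (simp_all add: Inv_def)
  have "card G \<le> card (EE n)" using \<open>G \<subseteq> EE n\<close> by (simp add: card_mono)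
  show "halted x y n G"
  proof (cases "n = 0")
    case True
    thus ?thesis using addable_sub[of x y n G] by (auto simp: halted_def EE_zero)
  next
    case False
    thus ?thesis using I card_EE_less[of n] \<open>card G \<le> card (EE n)\<close> by (auto simp: Inv_def)
  qed
qed


lemma card_EE_lower: "n * n \<le> 4 * card (EE n) + 1"
proof -
  define h where "h = n div 2"
  have sub: "{1..h} \<times> {h+1..n} \<subseteq> EE n" by (auto simp: EE_def h_def)
  have "card ({1..h} \<times> {h+1..n}) = h * (n - h)" by (simp add: card_cartesian_product)
  hence le: "h * (n - h) \<le> card (EE n)" using card_mono[OF finite_EE sub] by simp
  have "n = 2*h \<or> n = 2*h+1" by (auto simp: h_def)
  hence "n * n \<le> 4 * (h * (n - h)) + 1"
  proof
    assume "n = 2*h" thus ?thesis by (simp add: algebra_simps)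
  next
    assume "n = 2*h+1" thus ?thesis by (simp add: algebra_simps)
  qed
  thus ?thesis using le by linarith
qed


lemma addable_mem: "((a,b) \<in> addable_edges x y n G) \<longleftrightarrow> 1 \<le> a \<and> a < b \<and> b \<le> n \<and> (a, b) \<notin> G \<and>
   x \<le> card (initial_vertices n G - {b}) \<and> y \<le> card (terminal_vertices n G - {a})"
  by (simp add: addable_edges_def initial_insert terminal_insert)

lemma addable_lower:
  assumes G: "G \<subseteq> EE n" and x: "x \<le> card (initial_vertices n G)" and y: "y \<le> card (terminal_vertices n G)"
  shows "card (EE n) \<le> card (addable_edges x y n G) + card G + x * n + y * n"
proof -
  define I where "I = initial_vertices n G"
  define T where "T = terminal_vertices n G"
  have fI: "finite I" "I \<subseteq> {1..n}" by (auto simp: I_def initial_vertices_def)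
  have fT: "finite T" "T \<subseteq> {1..n}" by (auto simp: T_def terminal_vertices_def)
  define C1 where "C1 = (if card I \<le> x then {1..n} \<times> I else {})"
  define C2 where "C2 = (if card T \<le> y then T \<times> {1..n} else {})"
  have cC1: "card C1 \<le> x * n"
  proof (cases "card I \<le> x")
    case True
    hence "card C1 = n * card I" by (simp add: C1_def card_cartesian_product)
    also have "\<dots> \<le> n * x" using True by simp
    finally show ?thesis by (simp add: mult.commute)
  qed (simp add: C1_def)
  have cC2: "card C2 \<le> y * n"
  proof (cases "card T \<le> y")
    case True
    hence "card C2 = card T * n" by (simp add: C2_def card_cartesian_product)
    also have "\<dots> \<le> y * n" using True by simp
    finally show ?thesis by simp
  qed (simp add: C2_def)
  have sub: "EE n \<subseteq> addable_edges x y n G \<union> G \<union> C1 \<union> C2"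
  proof
    fix e assume e: "e \<in> EE n"
    obtain a b where ab: "e = (a,b)" by fastforce
    show "e \<in> addable_edges x y n G \<union> G \<union> C1 \<union> C2"
    proof (rule ccontr)
      assume nin: "e \<notin> addable_edges x y n G \<union> G \<union> C1 \<union> C2"
      have rng: "1 \<le> a" "a < b" "b \<le> n" using e ab by (auto simp: EE_def)
      have ng: "\<not> (x \<le> card (I - {b}) \<and> y \<le> card (T - {a}))"
        using nin rng ab addable_mem[of a b x y n G] unfolding I_def T_def by blast
      have h1: "x \<le> card (I - {b})"
        proof (cases "b \<in> I")
          case True
          have "card (I - {b}) = card I - 1" using True fI by simp
          moreover have "\<not> card I \<le> x" using True nin ab rng by (auto simp: C1_def)
          ultimately show ?thesis by linarith
        qed (use x I_def in simp)
        have h2: "y \<le> card (T - {a})"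
        proof (cases "a \<in> T")
          case True
          have "card (T - {a}) = card T - 1" using True fT by simp
          moreover have "\<not> card T \<le> y" using True nin ab rng by (auto simp: C2_def)
          ultimately show ?thesis by linarith
        qed (use y T_def in simp)
        show False using ng h1 h2 by blast
    qed
  qed
  have "card (EE n) \<le> card (addable_edges x y n G \<union> G \<union> C1 \<union> C2)"
    using sub by (intro card_mono) (use fI fT in \<open>auto simp: C1_def C2_def intro: finite_subset[OF G]\<close>)
  also have "\<dots> \<le> card (addable_edges x y n G) + card G + card C1 + card C2"
    by (meson add_mono_thms_linordered_semiring(3) card_Un_le order_trans)
  finally show ?thesis using cC1 cC2 by linarith
qed


lemma no_S_initial:
  assumes "G \<subseteq> EE n" "x + 1 \<le> n" "G \<inter> EE (x+1) = {}"
  shows "x + 1 \<le> card (initial_vertices n G)"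
proof -
  have "{1..x+1} \<subseteq> initial_vertices n G"
  proof
    fix v assume v: "v \<in> {1..x+1}"
    have "\<not> (\<exists>a. (a, v) \<in> G)"
    proof
      assume "\<exists>a. (a, v) \<in> G"
      then obtain a where a: "(a,v) \<in> G" by blast
      hence "(a,v) \<in> EE n" using assms(1) by blast
      hence "1 \<le> a \<and> a < v" by (simp add: EE_def)
      hence "(a,v) \<in> EE (x+1)" using v by (simp add: EE_def)
      thus False using a assms(3) by blast
    qed
    thus "v \<in> initial_vertices n G" using v assms(2) by (auto simp: initial_vertices_def)
  qed
  moreover have "finite (initial_vertices n G)" by (auto simp: initial_vertices_def)
  ultimately have "card {1..x+1} \<le> card (initial_vertices n G)" by (metis card_mono)
  moreover have "card {1..x+1} = x + 1" by simp
  ultimately show ?thesis by linarith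
qed



definition hh :: "nat \<Rightarrow> nat \<Rightarrow> real \<Rightarrow> (nat \<times> nat) set \<Rightarrow> real" where
  "hh x m c G = (if G \<inter> EE (x+1) \<noteq> {} \<and> card G \<le> m then 1 else 0) - c * real (min (card G) m)"

lemma sum_if_card: "finite A \<Longrightarrow> (\<Sum>e\<in>A. if e \<in> S then 1 else 0 :: real) = real (card (A \<inter> S))"
  by (simp add: sum.If_cases)

lemma one_step:
  assumes fin: "finite G" and c: "c \<ge> 0"
  and hyp: "\<not> halted x y n G \<Longrightarrow> card G < m \<Longrightarrow> real (card (EE (x+1))) \<le> c * real (card (addable_edges x y n G))"
  shows "measure_pmf.expectation (process_step x y n G) (hh x m c) \<le> hh x m c G"
proof (cases "halted x y n G")
  case True thus ?thesis by (simp add: step_halted)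
next
  case nh: False
  define A where "A = addable_edges x y n G"
  define S where "S = EE (x+1)"
  have Ane: "A \<noteq> {}" "finite A" using nh by (auto simp: halted_def A_def)
  have notG: "\<And>e. e \<in> A \<Longrightarrow> e \<notin> G" using addable_sub unfolding A_def by blast
  have cardins: "\<And>e. e \<in> A \<Longrightarrow> card (insert e G) = Suc (card G)" using notG fin by simp
  have E: "measure_pmf.expectation (process_step x y n G) (hh x m c) = (\<Sum>e\<in>A. hh x m c (insert e G)) / card A"
    using nh Ane by (simp add: step_not_halted A_def integral_pmf_of_set)
  have cA: "real (card A) > 0" using Ane by auto
  have key: "(\<Sum>e\<in>A. hh x m c (insert e G)) \<le> card A * hh x m c G"
  proof (cases "m \<le> card G")
    case True
    have "\<And>e. e\<in>A \<Longrightarrow> hh x m c (insert e G) \<le> hh x m c G"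
      using cardins True by (auto simp: hh_def)
    hence "(\<Sum>e\<in>A. hh x m c (insert e G)) \<le> (\<Sum>e\<in>A. hh x m c G)" by (rule sum_mono)
    thus ?thesis by simp
  next
    case lt: False
    show ?thesis
    proof (cases "G \<inter> S = {}")
      case True
      have "\<And>e. e\<in>A \<Longrightarrow> hh x m c (insert e G) = (if e \<in> S then 1 else 0) - c * (real (card G) + 1)"
        using cardins lt True by (auto simp: hh_def S_def)
      hence "(\<Sum>e\<in>A. hh x m c (insert e G)) = (\<Sum>e\<in>A. (if e \<in> S then 1 else 0) - c * (real (card G) + 1))"
        by (rule sum.cong[OF refl])
      also have "\<dots> = real (card (A \<inter> S)) - card A * (c * (real (card G) + 1))"
        using Ane by (simp add: sum_subtractf sum_if_card)
      also have "real (card (A \<inter> S)) \<le> real (card S)"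
        by (simp add: S_def card_mono)
      also have "real (card S) \<le> c * card A" using hyp nh lt by (simp add: S_def A_def)
      also have "c * card A - card A * (c * (real (card G) + 1)) = card A * hh x m c G"
        using lt True by (simp add: hh_def S_def algebra_simps)
      finally show ?thesis by simp
    next
      case False
      have "\<And>e. e\<in>A \<Longrightarrow> hh x m c (insert e G) \<le> hh x m c G"
      proof -
      fix e assume e: "e \<in> A"
      have m1: "c * real (card G) \<le> c * (1 + real (card G))" using c by (simp add: mult_left_mono)
      show "hh x m c (insert e G) \<le> hh x m c G"
        using cardins[OF e] lt False m1 by (auto simp: hh_def S_def)
    qed
      hence "(\<Sum>e\<in>A. hh x m c (insert e G)) \<le> (\<Sum>e\<in>A. hh x m c G)" by (rule sum_mono)
      thus ?thesis by simp
    qed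
  qed
  show ?thesis unfolding E using key cA by (simp add: pos_divide_le_eq mult.commute)
qed


lemma finite_set_step: "finite (set_pmf (process_step x y n G))"
proof (cases "halted x y n G")
  case True thus ?thesis by (simp add: step_halted)
next
  case False
  hence "addable_edges x y n G \<noteq> {}" by (simp add: halted_def)
  thus ?thesis using False by (simp add: step_not_halted)
qed

lemma set_iter_sub: "x \<le> n \<Longrightarrow> y \<le> n \<Longrightarrow> set_pmf (iter x y n k) \<subseteq> Pow (EE n)"
proof
  fix G assume "x \<le> n" "y \<le> n" "G \<in> set_pmf (iter x y n k)"
  hence "Inv x y n k G" by (rule Inv_iter)
  thus "G \<in> Pow (EE n)" by (simp add: Inv_def)
qed

lemma iter_exp:
  assumes xn: "x \<le> n" and yn: "y \<le> n" and c: "c \<ge> 0"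
  and hyp: "\<And>G. G \<subseteq> EE n \<Longrightarrow> x \<le> card (initial_vertices n G) \<Longrightarrow> y \<le> card (terminal_vertices n G)
     \<Longrightarrow> \<not> halted x y n G \<Longrightarrow> card G < m \<Longrightarrow> real (card (EE (x+1))) \<le> c * real (card (addable_edges x y n G))"
  shows "measure_pmf.expectation (iter x y n k) (hh x m c) \<le> 0"
proof (induction k)
  case 0
  show ?case by (simp add: iter_def hh_def)
next
  case (Suc k)
  have sub: "set_pmf (iter x y n k) \<subseteq> Pow (EE n)" using set_iter_sub[OF xn yn] .
  have "measure_pmf.expectation (iter x y n (Suc k)) (hh x m c)
      = (\<Sum>a\<in>Pow (EE n). pmf (iter x y n k) a *\<^sub>R measure_pmf.expectation (process_step x y n a) (hh x m c))"
    unfolding iter_Suc by (rule pmf_expectation_bind) (use sub finite_set_step in auto)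
  also have "\<dots> \<le> (\<Sum>a\<in>Pow (EE n). pmf (iter x y n k) a *\<^sub>R hh x m c a)"
  proof (rule sum_mono)
    fix a assume "a \<in> Pow (EE n)"
    show "pmf (iter x y n k) a *\<^sub>R measure_pmf.expectation (process_step x y n a) (hh x m c)
          \<le> pmf (iter x y n k) a *\<^sub>R hh x m c a"
    proof (cases "a \<in> set_pmf (iter x y n k)")
      case True
      hence I: "Inv x y n k a" using Inv_iter[OF xn yn] by blast
      hence "finite a" by (auto simp: Inv_def intro: finite_subset)
      hence "measure_pmf.expectation (process_step x y n a) (hh x m c) \<le> hh x m c a"
        using I by (intro one_step c hyp) (auto simp: Inv_def)
      thus ?thesis by (simp add: mult_left_mono)
    next
      case False
      hence "pmf (iter x y n k) a = 0" by (simp add: set_pmf_eq)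
      thus ?thesis by simp
    qed
  qed
  also have "\<dots> = measure_pmf.expectation (iter x y n k) (hh x m c)"
    by (rule integral_measure_pmf[symmetric]) (use sub in auto)
  also have "\<dots> \<le> 0" by (rule Suc.IH)
  finally show ?case .
qed



lemma fin_final: "x \<le> n \<Longrightarrow> y \<le> n \<Longrightarrow> finite (set_pmf (final_graph x y n))"
  using set_iter_sub[of x n y "n*n"] by (simp add: final_iter finite_subset)

lemma integrable_final: "x \<le> n \<Longrightarrow> y \<le> n \<Longrightarrow> integrable (measure_pmf (final_graph x y n)) (f :: _ \<Rightarrow> real)"
  by (rule integrable_measure_pmf_finite) (rule fin_final)

lemma upper:
  assumes "x \<le> n" "y \<le> n"
  shows "expected_edges x y n \<le> real n ^ 2"
proof -
  have "expected_edges x y n \<le> measure_pmf.expectation (final_graph x y n) (\<lambda>_. real n ^ 2)"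
    unfolding expected_edges_def
  proof (rule integral_mono_AE[OF integrable_final[OF assms] integrable_final[OF assms]], rule AE_pmfI)
    fix G assume "G \<in> set_pmf (final_graph x y n)"
    hence "G \<subseteq> EE n" using final_inv[OF assms] by blast
    hence "card G \<le> n * n" using card_mono[OF finite_EE] card_EE_le order_trans by blast
    thus "real (card G) \<le> real n ^ 2" by (simp add: power2_eq_square flip: of_nat_mult)
  qed
  thus ?thesis by simp
qed

lemma lower:
  fixes x y n :: nat
  assumes n: "16 * (x + y) + 4 \<le> n"
  shows "real (n * n div (64 * ((x+1)*(x+1)))) / 2 \<le> expected_edges x y n"
proof -
  define Kb where "Kb = (x+1)*(x+1)"
  define m where "m = n * n div (64 * Kb)"
  define c :: real where "c = 8 * Kb / (real n)^2"
  have xn: "x \<le> n" and yn: "y \<le> n" and x1n: "x + 1 \<le> n" using n by auto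
  have Kb1: "Kb \<ge> 1" by (simp add: Kb_def)
  have npos: "real n > 0" using n by simp
  have c0: "c \<ge> 0" by (simp add: c_def)
  have mK: "m * (64 * Kb) \<le> n * n" unfolding m_def by (rule div_times_less_eq_dividend)
  have m64: "m * 64 \<le> n * n" using mK Kb1
    by (metis le_trans mult.assoc mult_le_mono2 nat_mult_1_right)
  have nn16: "16 \<le> n * n" using n mult_le_mono[of 4 n 4 n] by simp
  have xyn: "16 * ((x+y) * n) \<le> n * n" using n mult_le_mono1[of "16*(x+y)" n n] by simp
  have SK: "card (EE (x+1)) \<le> Kb" using card_EE_le[of "x+1"] by (simp add: Kb_def)
  have cm: "c * real m \<le> 1/8"
  proof -
    have "real (m * (64 * Kb)) \<le> real (n * n)" using mK by linarith
    hence "real m * 64 * real Kb \<le> (real n)^2" by (simp add: power2_eq_square)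
    thus ?thesis using npos Kb1 by (simp add: c_def field_simps)
  qed
  have addbig: "(real n)^2 / 8 \<le> real (card (addable_edges x y n G))"
    if G: "G \<subseteq> EE n" "x \<le> card (initial_vertices n G)" "y \<le> card (terminal_vertices n G)" "card G < m" for G
  proof -
    have "card (EE n) \<le> card (addable_edges x y n G) + card G + x * n + y * n"
      by (rule addable_lower[OF G(1-3)])
    moreover have "n * n \<le> 4 * card (EE n) + 1" by (rule card_EE_lower)
    ultimately have "n * n \<le> 4 * card (addable_edges x y n G) + 4 * card G + 4 * (x * n) + 4 * (y * n) + 1"
      by linarith
    hence "n * n \<le> 4 * card (addable_edges x y n G) + 4 * card G + 4 * ((x + y) * n) + 1"
      by (simp add: distrib_right)
    hence "real (n * n) \<le> 4 * real (card (addable_edges x y n G)) + 4 * real (card G) + 4 * real ((x + y) * n) + 1"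
      by linarith
    moreover have "real (card G) * 64 \<le> real (n * n)" using G(4) m64 by linarith
    moreover have "16 * real ((x + y) * n) \<le> real (n * n)" using xyn by linarith
    moreover have "16 \<le> real (n * n)" using nn16 by linarith
    ultimately show ?thesis by (simp add: power2_eq_square)
  qed
  have hyp: "real (card (EE (x+1))) \<le> c * real (card (addable_edges x y n G))"
    if G: "G \<subseteq> EE n" "x \<le> card (initial_vertices n G)" "y \<le> card (terminal_vertices n G)" "card G < m" for G
  proof -
    have "real (card (EE (x+1))) \<le> c * ((real n)^2 / 8)" using SK npos by (simp add: c_def)
    also have "\<dots> \<le> c * real (card (addable_edges x y n G))"
      by (rule mult_left_mono[OF addbig[OF G] c0])
    finally show ?thesis .
  qed
  have Eh: "measure_pmf.expectation (final_graph x y n) (hh x m c) \<le> 0"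
    unfolding final_iter by (rule iter_exp[OF xn yn c0 hyp])
  have pw: "real m - real m * hh x m c G - c * real m * real m \<le> real (card G)"
    if G: "G \<in> set_pmf (final_graph x y n)" for G
  proof (cases "m \<le> card G")
    case True
    have "hh x m c G \<ge> - c * real m" using True by (simp add: hh_def)
    hence "real m * hh x m c G \<ge> real m * (- c * real m)" by (rule mult_left_mono) simp
    thus ?thesis using True by (simp add: algebra_simps)
  next
    case False
    have inv: "halted x y n G" "G \<subseteq> EE n" "x \<le> card (initial_vertices n G)" "y \<le> card (terminal_vertices n G)"
      using final_inv[OF xn yn G] by auto
    have "(real n)^2 / 8 \<le> real (card (addable_edges x y n G))" using addbig inv False by simp
    hence "addable_edges x y n G \<noteq> {}" using npos by auto
    hence tdg: "is_xy_tdg x y n G" using inv(1) by (simp add: halted_def)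
    have "G \<inter> EE (x+1) \<noteq> {}"
    proof
      assume "G \<inter> EE (x+1) = {}"
      hence "x + 1 \<le> card (initial_vertices n G)" using no_S_initial[OF inv(2) x1n] by blast
      thus False using tdg by (simp add: is_xy_tdg_def)
    qed
    hence hG: "hh x m c G = 1 - c * real (card G)" using False by (simp add: hh_def)
    have "c * real (card G) \<le> c * real m" using False c0 by (simp add: mult_left_mono)
    hence "hh x m c G \<ge> 1 - c * real m" using hG by simp
    hence "real m * hh x m c G \<ge> real m * (1 - c * real m)" by (rule mult_left_mono) simp
    thus ?thesis by (simp add: algebra_simps)
  qed
  have "measure_pmf.expectation (final_graph x y n) (\<lambda>G. real m - real m * hh x m c G - c * real m * real m)
        \<le> expected_edges x y n"
    unfolding expected_edges_def
    by (rule integral_mono_AE[OF integrable_final[OF xn yn] integrable_final[OF xn yn]], rule AE_pmfI, rule pw)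
  moreover have "measure_pmf.expectation (final_graph x y n) (\<lambda>G. real m - real m * hh x m c G - c * real m * real m)
      = real m - real m * measure_pmf.expectation (final_graph x y n) (hh x m c) - c * real m * real m"
    using integrable_final[OF xn yn] by simp
  moreover have "real m * measure_pmf.expectation (final_graph x y n) (hh x m c) \<le> 0"
    using Eh by (simp add: mult_nonneg_nonpos)
  moreover have "c * real m * real m \<le> real m / 8"
    using mult_right_mono[OF cm, of "real m"] by simp
  ultimately have "real m / 2 \<le> expected_edges x y n" by linarith
  thus ?thesis by (simp add: m_def Kb_def)
qed


lemma div_lower: "real a / real k - 1 \<le> real (a div k)" if "k > 0" for a k :: nat
proof -
  have "a = a div k * k + a mod k" by simp
  moreover have "a mod k < k" using that by simp
  ultimately have "a \<le> (a div k + 1) * k" by (metis add_le_mono le_refl less_imp_le_nat mult_Suc Suc_eq_plus1 add.commute)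
  hence "real a \<le> (real (a div k) + 1) * real k" by (metis of_nat_1 of_nat_add of_nat_le_iff of_nat_mult)
  thus ?thesis using that by (simp add: field_simps)
qed

theorem mainTheorem15:
  fixes x y :: nat
  assumes "x > 0" and "y > 0"
  shows "(\<lambda>n. expected_edges x y n) \<in> \<Theta>(\<lambda>n. real n ^ 2)"
proof -
  define Kb where "Kb = (x+1)*(x+1)"
  have Kb1: "Kb \<ge> 1" by (simp add: Kb_def)
  show ?thesis
  proof (rule bigthetaI'[where ?c1.0 = "1 / (256 * real Kb)" and ?c2.0 = 1])
    show "1 / (256 * real Kb) > 0" using Kb1 by simp
    show "(1::real) > 0" by simp
    show "\<forall>\<^sub>F n in at_top. 1 / (256 * real Kb) * norm (real n ^ 2) \<le> norm (expected_edges x y n) \<and>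
        norm (expected_edges x y n) \<le> 1 * norm (real n ^ 2)"
      unfolding eventually_at_top_linorder
    proof (intro exI allI impI)
      fix n :: nat
      assume n: "16 * (x + y) + 4 + 128 * Kb \<le> n"
      hence n1: "16 * (x + y) + 4 \<le> n" by simp
      have xn: "x \<le> n" "y \<le> n" using n by auto
      have low: "real (n * n div (64 * Kb)) / 2 \<le> expected_edges x y n"
        using lower[OF n1] by (simp add: Kb_def)
      have dl: "real (n * n) / real (64 * Kb) - 1 \<le> real (n * n div (64 * Kb))"
        by (rule div_lower) (use Kb1 in simp)
      have "128 * Kb \<le> n" using n by simp
      hence "128 * Kb \<le> n * n" using n by (metis le_trans le_square)
      hence nn: "128 * real Kb \<le> real n ^ 2" by (simp add: power2_eq_square flip: of_nat_mult) 
      have "real n ^ 2 / (256 * real Kb) \<le> (real n ^ 2 / (64 * real Kb) - 1) / 2"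
        using nn Kb1 by (simp add: field_simps)
      also have "\<dots> \<le> expected_edges x y n"
        using dl low by (simp add: power2_eq_square)
      finally have L: "real n ^ 2 / (256 * real Kb) \<le> expected_edges x y n" .
      have U: "expected_edges x y n \<le> real n ^ 2" by (rule upper[OF xn])
      have "0 \<le> real n ^ 2 / (256 * real Kb)" by simp
      hence E0: "0 \<le> expected_edges x y n" using L by linarith
      show "1 / (256 * real Kb) * norm (real n ^ 2) \<le> norm (expected_edges x y n) \<and>
        norm (expected_edges x y n) \<le> 1 * norm (real n ^ 2)"
        using L U E0 by simp
    qed
  qed
qed

end
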